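(* Let $n\geq 3$ and let $L^B$ be a blow-up of the Boolean lattice $L\cong\mathbf{2}^n$ such that $L^B\cong L\cong\mathbf{2}^n$ (i.e. every replacing chain has exactly one element). Then $G^c(L^B)_{SR}=G(L^B)$.
   Context: Blow-up: keep $0,1$ of $L=\mathbf{2}^n$ and replace every $x\in L\setminus\{0,1\}$ by a finite nonempty chain $C_x$, ordered by the chain order within $C_x$ and, for $a\in C_x,b\in C_y$, $x\neq y$, by $a\leq b$ iff $x\leq y$ in $L$. $Z^*(M)$ is the set of nonzero $a$ with $a\wedge b=0$ for some $b\neq0$. $G(M)$ (zero-divisor graph) has vertex set $Z^*(M)$, distinct $a,b$ adjacent iff $a\wedge b=0$; $G^c(M)$ is its complement on the same vertex set. In a connected graph, $u$ is maximally distant from $v$ if $d(v,w)\leq d(u,v)$ for all neighbours $w$ of $u$; mutually maximally distant means each is maximally distant from the other. $G_{SR}$ has as vertices those $u$ mutually maximally distant from some $v$, distinct vertices adjacent iff mutually maximally distant in $G$. *)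

theory Defs
  imports Main
begin

(* Elements of a blow-up of the Boolean lattice 2^n = Pow {..<n}:
   Bot (= 0), Top (= 1), and Mid x i = the i-th element of the chain C_x
   replacing the proper nonempty subset x. *)
datatype blowup = Bot | Top | Mid "nat set" nat

(* carrier of the blow-up; k x is the length of the chain C_x (k x >= 1) *)
definition blow_carrier :: "nat \<Rightarrow> (nat set \<Rightarrow> nat) \<Rightarrow> blowup set" where
  "blow_carrier n k = {Bot, Top} \<union>
     {Mid x i | x i. x \<subseteq> {..<n} \<and> x \<noteq> {} \<and> x \<noteq> {..<n} \<and> i < k x}"

fun blow_le :: "blowup \<Rightarrow> blowup \<Rightarrow> bool" where
  "blow_le Bot b = True"
| "blow_le a Top = True"
| "blow_le Top b = (b = Top)"
| "blow_le (Mid x i) Bot = False"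
| "blow_le (Mid x i) (Mid y j) = (if x = y then i \<le> j else x \<subseteq> y)"

definition meet_zero :: "nat \<Rightarrow> (nat set \<Rightarrow> nat) \<Rightarrow> blowup \<Rightarrow> blowup \<Rightarrow> bool" where
  "meet_zero n k a b \<longleftrightarrow>
     (\<forall>c\<in>blow_carrier n k. blow_le c a \<and> blow_le c b \<longrightarrow> c = Bot)"

definition Zstar :: "nat \<Rightarrow> (nat set \<Rightarrow> nat) \<Rightarrow> blowup set" where
  "Zstar n k = {a \<in> blow_carrier n k. a \<noteq> Bot \<and>
                 (\<exists>b\<in>blow_carrier n k. b \<noteq> Bot \<and> meet_zero n k a b)}"

definition zdg_adj :: "nat \<Rightarrow> (nat set \<Rightarrow> nat) \<Rightarrow> blowup \<Rightarrow> blowup \<Rightarrow> bool" where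
  "zdg_adj n k a b \<longleftrightarrow> a \<in> Zstar n k \<and> b \<in> Zstar n k \<and> a \<noteq> b \<and> meet_zero n k a b"

definition zdgc_adj :: "nat \<Rightarrow> (nat set \<Rightarrow> nat) \<Rightarrow> blowup \<Rightarrow> blowup \<Rightarrow> bool" where
  "zdgc_adj n k a b \<longleftrightarrow> a \<in> Zstar n k \<and> b \<in> Zstar n k \<and> a \<noteq> b \<and> \<not> meet_zero n k a b"

definition walk_len :: "'a set \<Rightarrow> ('a \<Rightarrow> 'a \<Rightarrow> bool) \<Rightarrow> 'a \<Rightarrow> 'a \<Rightarrow> nat \<Rightarrow> bool" where
  "walk_len V E u v m \<longleftrightarrow> (\<exists>xs. length xs = Suc m \<and> hd xs = u \<and> last xs = v \<and>
      set xs \<subseteq> V \<and> (\<forall>i<m. E (xs ! i) (xs ! Suc i)))"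

definition gdist :: "'a set \<Rightarrow> ('a \<Rightarrow> 'a \<Rightarrow> bool) \<Rightarrow> 'a \<Rightarrow> 'a \<Rightarrow> nat" where
  "gdist V E u v = (LEAST m. walk_len V E u v m)"

definition max_distant :: "'a set \<Rightarrow> ('a \<Rightarrow> 'a \<Rightarrow> bool) \<Rightarrow> 'a \<Rightarrow> 'a \<Rightarrow> bool" where
  "max_distant V E u v \<longleftrightarrow> (\<forall>w\<in>V. E u w \<longrightarrow> gdist V E v w \<le> gdist V E u v)"

definition mutually_max_distant :: "'a set \<Rightarrow> ('a \<Rightarrow> 'a \<Rightarrow> bool) \<Rightarrow> 'a \<Rightarrow> 'a \<Rightarrow> bool" where
  "mutually_max_distant V E u v \<longleftrightarrow> max_distant V E u v \<and> max_distant V E v u"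

definition SR_vertices :: "'a set \<Rightarrow> ('a \<Rightarrow> 'a \<Rightarrow> bool) \<Rightarrow> 'a set" where
  "SR_vertices V E = {u \<in> V. \<exists>v\<in>V. mutually_max_distant V E u v}"

definition SR_adj :: "'a set \<Rightarrow> ('a \<Rightarrow> 'a \<Rightarrow> bool) \<Rightarrow> 'a \<Rightarrow> 'a \<Rightarrow> bool" where
  "SR_adj V E u v \<longleftrightarrow> u \<in> SR_vertices V E \<and> v \<in> SR_vertices V E \<and> u \<noteq> v \<and>
      mutually_max_distant V E u v"

end

theory Submission
  imports Defs
begin

definition propr :: "nat \<Rightarrow> nat set \<Rightarrow> bool" where
  "propr n x \<longleftrightarrow> x \<subseteq> {..<n} \<and> x \<noteq> {} \<and> x \<noteq> {..<n}"

lemma carrier_eq: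
  assumes "\<forall>x. x \<subseteq> {..<n} \<and> x \<noteq> {} \<and> x \<noteq> {..<n} \<longrightarrow> k x = 1"
  shows "blow_carrier n k = {Bot,Top} \<union> {Mid x 0 | x. propr n x}"
proof -
  have "{Mid x i | x i. x \<subseteq> {..<n} \<and> x \<noteq> {} \<and> x \<noteq> {..<n} \<and> i < k x} = {Mid x 0 | x. propr n x}"
  proof (intro set_eqI iffI)
    fix a assume "a \<in> {Mid x i | x i. x \<subseteq> {..<n} \<and> x \<noteq> {} \<and> x \<noteq> {..<n} \<and> i < k x}"
    then obtain x i where "a = Mid x i" "x \<subseteq> {..<n}" "x \<noteq> {}" "x \<noteq> {..<n}" "i < k x" by blast
    thus "a \<in> {Mid x 0 | x. propr n x}" using assms unfolding propr_def by auto
  next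
    fix a assume "a \<in> {Mid x 0 | x. propr n x}"
    then obtain x where "a = Mid x 0" "propr n x" by blast
    thus "a \<in> {Mid x i | x i. x \<subseteq> {..<n} \<and> x \<noteq> {} \<and> x \<noteq> {..<n} \<and> i < k x}"
      using assms unfolding propr_def by auto
  qed
  thus ?thesis unfolding blow_carrier_def by simp
qed

lemma blow_le_refl: "blow_le a a"
  by (cases a) auto

lemma mz:
  assumes K: "\<forall>x. x \<subseteq> {..<n} \<and> x \<noteq> {} \<and> x \<noteq> {..<n} \<longrightarrow> k x = 1"
    and px: "propr n x" and py: "propr n y"
  shows "meet_zero n k (Mid x 0) (Mid y 0) \<longleftrightarrow> x \<inter> y = {}"
proof
  assume m: "meet_zero n k (Mid x 0) (Mid y 0)"
  show "x \<inter> y = {}"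
  proof (rule ccontr)
    assume ne: "x \<inter> y \<noteq> {}"
    have "propr n (x \<inter> y)" using px ne unfolding propr_def by auto
    hence "Mid (x \<inter> y) 0 \<in> blow_carrier n k" using carrier_eq[OF K] by auto
    moreover have "blow_le (Mid (x \<inter> y) 0) (Mid x 0)" "blow_le (Mid (x \<inter> y) 0) (Mid y 0)" by auto
    ultimately show False using m unfolding meet_zero_def by blast
  qed
next
  assume d: "x \<inter> y = {}"
  show "meet_zero n k (Mid x 0) (Mid y 0)"
    unfolding meet_zero_def
  proof (intro ballI impI)
    fix c assume "c \<in> blow_carrier n k" and le: "blow_le c (Mid x 0) \<and> blow_le c (Mid y 0)"
    then obtain z where "c = Bot \<or> c = Top \<or> (c = Mid z 0 \<and> propr n z)"
      using carrier_eq[OF K] by auto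
    then show "c = Bot"
    proof (elim disjE conjE)
      assume "c = Top" thus ?thesis using le by simp
    next
      assume c: "c = Mid z 0" "propr n z"
      have "z \<subseteq> x" "z \<subseteq> y" using le c by (auto split: if_splits)
      thus ?thesis using c d unfolding propr_def by auto
    qed simp
  qed
qed

lemma Zstar_eq:
  assumes K: "\<forall>x. x \<subseteq> {..<n} \<and> x \<noteq> {} \<and> x \<noteq> {..<n} \<longrightarrow> k x = 1"
  shows "Zstar n k = {Mid x 0 | x. propr n x}"
proof
  show "Zstar n k \<subseteq> {Mid x 0 | x. propr n x}"
  proof
    fix a assume a: "a \<in> Zstar n k"
    then obtain b where b: "b \<in> blow_carrier n k" "b \<noteq> Bot" "meet_zero n k a b"
      and ac: "a \<in> blow_carrier n k" "a \<noteq> Bot" unfolding Zstar_def by auto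
    have "a \<noteq> Top"
    proof
      assume "a = Top"
      have "blow_le b Top" by (cases b) auto
      hence "blow_le b a \<and> blow_le b b" using blow_le_refl \<open>a = Top\<close> by simp
      thus False using b unfolding meet_zero_def by blast
    qed
    thus "a \<in> {Mid x 0 | x. propr n x}" using ac carrier_eq[OF K] by auto
  qed
next
  show "{Mid x 0 | x. propr n x} \<subseteq> Zstar n k"
  proof
    fix a assume "a \<in> {Mid x 0 | x. propr n x}"
    then obtain x where a: "a = Mid x 0" and px: "propr n x" by auto
    have py: "propr n ({..<n} - x)" using px unfolding propr_def by auto
    have "meet_zero n k a (Mid ({..<n} - x) 0)" using mz[OF K px py] a by auto
    moreover have "Mid ({..<n} - x) 0 \<in> blow_carrier n k" "a \<in> blow_carrier n k"
      using carrier_eq[OF K] px py a by auto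
    ultimately show "a \<in> Zstar n k" unfolding Zstar_def using a by auto
  qed
qed

lemma walk0: "u \<in> V \<Longrightarrow> walk_len V E u u 0"
  unfolding walk_len_def by (rule exI[of _ "[u]"]) auto

lemma walk1: "u \<in> V \<Longrightarrow> v \<in> V \<Longrightarrow> E u v \<Longrightarrow> walk_len V E u v 1"
  unfolding walk_len_def by (rule exI[of _ "[u,v]"]) auto

lemma walk2: "u \<in> V \<Longrightarrow> v \<in> V \<Longrightarrow> w \<in> V \<Longrightarrow> E u w \<Longrightarrow> E w v \<Longrightarrow> walk_len V E u v 2"
  unfolding walk_len_def
  apply (rule exI[of _ "[u,w,v]"])
  apply (auto simp: numeral_2_eq_2 less_Suc_eq)
  done

lemma walk_0D: "walk_len V E u v 0 \<Longrightarrow> u = v"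
  unfolding walk_len_def
  by (metis One_nat_def append_butlast_last_id append_self_conv2 hd_Cons_tl length_0_conv
      length_butlast diff_Suc_1 list.sel(1) list.size(3) nat.distinct(1))

lemma walk_1D: assumes "walk_len V E u v 1" shows "E u v"
proof -
  obtain xs where xs: "length xs = 2" "hd xs = u" "last xs = v" "\<forall>i<1. E (xs ! i) (xs ! Suc i)"
    using assms unfolding walk_len_def by (auto simp del: One_nat_def)
  then obtain a b where "xs = [a,b]"
    by (auto simp: numeral_2_eq_2 length_Suc_conv)
  thus ?thesis using xs by auto
qed

lemma gdist_le: "walk_len V E u v m \<Longrightarrow> gdist V E u v \<le> m"
  unfolding gdist_def by (rule Least_le)

lemma gdist_walk: "walk_len V E u v m \<Longrightarrow> walk_len V E u v (gdist V E u v)"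
  unfolding gdist_def by (rule LeastI)


theorem corollary3p17:
  fixes n :: nat and k :: "nat set \<Rightarrow> nat"
  assumes "n \<ge> 3"
    and "\<forall>x. x \<subseteq> {..<n} \<and> x \<noteq> {} \<and> x \<noteq> {..<n} \<longrightarrow> k x = 1"
  shows "SR_vertices (Zstar n k) (zdgc_adj n k) = Zstar n k \<and>
         (\<forall>u v. SR_adj (Zstar n k) (zdgc_adj n k) u v \<longleftrightarrow> zdg_adj n k u v)"
proof -
  note K = assms(2)
  define V where "V = Zstar n k"
  define E where "E = zdgc_adj n k"
  have Vc: "V = {Mid x 0 | x. propr n x}" unfolding V_def using Zstar_eq[OF K] .
  have mid: "Mid x 0 \<in> V" if "propr n x" for x using that Vc by auto
  have Eiff: "E (Mid x 0) (Mid y 0) \<longleftrightarrow> x \<noteq> y \<and> x \<inter> y \<noteq> {}"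
    if "propr n x" "propr n y" for x y
    using mid[OF that(1)] mid[OF that(2)] mz[OF K that] unfolding E_def zdgc_adj_def V_def by auto
  have fin: "propr n z" if "z \<subseteq> {..<n}" "z \<noteq> {}" "card z < 3" for z
  proof -
    have "z \<noteq> {..<n}" using that assms(1) by auto
    thus ?thesis using that unfolding propr_def by auto
  qed
  have bridge: "\<exists>z. propr n z \<and> z \<noteq> x \<and> z \<inter> x \<noteq> {} \<and> z \<noteq> y \<and> z \<inter> y \<noteq> {}"
    if px: "propr n x" and py: "propr n y" and d: "x \<inter> y = {}" for x y
  proof -
    obtain a b where ab: "a \<in> x" "b \<in> y" using px py unfolding propr_def by auto
    have "card {a,b} < 3" by (simp add: card_insert_if)
    hence "propr n {a,b}" using fin[of "{a,b}"] ab px py unfolding propr_def by auto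
    thus ?thesis using ab d by (intro exI[of _ "{a,b}"]) auto
  qed
  have nbr: "\<exists>z. propr n z \<and> z \<noteq> x \<and> z \<inter> x \<noteq> {}" if px: "propr n x" for x
  proof (cases "\<exists>a\<in>x. \<exists>b\<in>x. a \<noteq> b")
    case True
    then obtain a b where ab: "a \<in> x" "b \<in> x" "a \<noteq> b" by auto
    have "propr n {a}" using fin[of "{a}"] ab px unfolding propr_def by auto
    thus ?thesis using ab by (intro exI[of _ "{a}"]) auto
  next
    case False
    then obtain a where xa: "x = {a}" using px unfolding propr_def by blast
    define b where "b = (if a = 0 then 1 else (0::nat))"
    have "b < n" "b \<noteq> a" using assms(1) unfolding b_def by auto
    moreover have "card {a,b} < 3" by (simp add: card_insert_if)
    ultimately have "propr n {a,b}" using fin[of "{a,b}"] xa px unfolding propr_def by auto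
    thus ?thesis using xa \<open>b \<noteq> a\<close> by (intro exI[of _ "{a,b}"]) auto
  qed
  have d0: "gdist V E u u = 0" if "u \<in> V" for u
    using gdist_le[OF walk0[OF that]] by simp
  have d1: "gdist V E (Mid x 0) (Mid y 0) = 1"
    if "propr n x" "propr n y" "x \<noteq> y" "x \<inter> y \<noteq> {}" for x y
  proof -
    have w: "walk_len V E (Mid x 0) (Mid y 0) 1"
      using walk1[OF mid[OF that(1)] mid[OF that(2)]] Eiff[OF that(1,2)] that by auto
    have "gdist V E (Mid x 0) (Mid y 0) \<noteq> 0"
      using gdist_walk[OF w] walk_0D that(3) by fastforce
    thus ?thesis using gdist_le[OF w] by simp
  qed
  have d2: "gdist V E (Mid x 0) (Mid y 0) = 2"
    if H: "propr n x" "propr n y" "x \<inter> y = {}" for x y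
  proof -
    obtain z where z: "propr n z" "z \<noteq> x" "z \<inter> x \<noteq> {}" "z \<noteq> y" "z \<inter> y \<noteq> {}"
      using bridge[OF H] by blast
    have w: "walk_len V E (Mid x 0) (Mid y 0) 2"
      using walk2[OF mid[OF H(1)] mid[OF H(2)] mid[OF z(1)]] Eiff[OF H(1) z(1)]
        Eiff[OF z(1) H(2)] z by blast
    have xy: "x \<noteq> y" using H unfolding propr_def by auto
    have "gdist V E (Mid x 0) (Mid y 0) \<noteq> 0"
      using gdist_walk[OF w] walk_0D xy by fastforce
    moreover have "gdist V E (Mid x 0) (Mid y 0) \<noteq> 1"
      using gdist_walk[OF w] walk_1D Eiff[OF H(1,2)] H by fastforce
    ultimately show ?thesis using gdist_le[OF w] by simp
  qed
  have dle: "gdist V E u v \<le> 2" if H: "u \<in> V" "v \<in> V" for u v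
  proof -
    obtain x y where u: "u = Mid x 0" "propr n x" and v: "v = Mid y 0" "propr n y"
      using H Vc by auto
    show ?thesis
      using d0[OF H(1)] d1[OF u(2) v(2)] d2[OF u(2) v(2)] u v
      by (cases "x = y"; cases "x \<inter> y = {}") auto
  qed
  have mmd: "mutually_max_distant V E (Mid x 0) (Mid y 0) \<longleftrightarrow> x \<inter> y = {}"
    if px: "propr n x" and py: "propr n y" for x y
  proof
    assume "x \<inter> y = {}"
    hence "gdist V E (Mid x 0) (Mid y 0) = 2" "gdist V E (Mid y 0) (Mid x 0) = 2"
      using d2 px py by (auto simp: Int_commute)
    thus "mutually_max_distant V E (Mid x 0) (Mid y 0)"
      unfolding mutually_max_distant_def max_distant_def using dle mid px py by auto
  next
    assume m: "mutually_max_distant V E (Mid x 0) (Mid y 0)"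
    show "x \<inter> y = {}"
    proof (rule ccontr)
      assume ne: "x \<inter> y \<noteq> {}"
      show False
      proof (cases "x = y")
        case True
        obtain z where z: "propr n z" "z \<noteq> x" "z \<inter> x \<noteq> {}" using nbr[OF px] by blast
        have "E (Mid x 0) (Mid z 0)" using Eiff[OF px z(1)] z by auto
        hence "gdist V E (Mid y 0) (Mid z 0) \<le> gdist V E (Mid x 0) (Mid y 0)"
          using m mid[OF z(1)] unfolding mutually_max_distant_def max_distant_def by blast
        moreover have "gdist V E (Mid y 0) (Mid z 0) = 1" using d1[OF py z(1)] z True by auto
        ultimately show False using d0[OF mid[OF px]] True by simp
      next
        case False
        have gen: False if pa: "propr n a" and pb: "propr n b" and ab: "a \<inter> b \<noteq> {}"
          and c: "c \<in> a" "c \<notin> b"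
          and md: "max_distant V E (Mid a 0) (Mid b 0)" for a b c
        proof -
          have "{c} \<subseteq> {..<n}" using pa c unfolding propr_def by auto
          hence pc: "propr n {c}" using fin[of "{c}"] by auto
          have "{c} \<noteq> a" using ab c by auto
          hence "E (Mid a 0) (Mid {c} 0)" using Eiff[OF pa pc] c by auto
          hence "gdist V E (Mid b 0) (Mid {c} 0) \<le> gdist V E (Mid a 0) (Mid b 0)"
            using md mid[OF pc] unfolding max_distant_def by blast
          moreover have "gdist V E (Mid b 0) (Mid {c} 0) = 2" using d2[OF pb pc] c by auto
          moreover have "gdist V E (Mid a 0) (Mid b 0) = 1" using d1[OF pa pb] ab
            using c by auto
          ultimately show False by simp
        qed
        from False have "(\<exists>c. c \<in> x \<and> c \<notin> y) \<or> (\<exists>c. c \<in> y \<and> c \<notin> x)" by blast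
        thus False
        proof
          assume "\<exists>c. c \<in> x \<and> c \<notin> y"
          thus False using gen[OF px py ne] m unfolding mutually_max_distant_def by blast
        next
          assume "\<exists>c. c \<in> y \<and> c \<notin> x"
          moreover have "y \<inter> x \<noteq> {}" using ne by auto
          ultimately show False using gen[OF py px] m unfolding mutually_max_distant_def by blast
        qed
      qed
    qed
  qed
  have SRV: "SR_vertices V E = V"
  proof
    show "SR_vertices V E \<subseteq> V" unfolding SR_vertices_def by auto
    show "V \<subseteq> SR_vertices V E"
    proof
      fix u assume "u \<in> V"
      then obtain x where u: "u = Mid x 0" "propr n x" using Vc by auto
      have py: "propr n ({..<n} - x)" using u(2) unfolding propr_def by auto
      have "mutually_max_distant V E u (Mid ({..<n} - x) 0)" using mmd[OF u(2) py] u by auto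
      thus "u \<in> SR_vertices V E" unfolding SR_vertices_def using \<open>u \<in> V\<close> mid[OF py] by auto
    qed
  qed
  have adj: "SR_adj V E u v \<longleftrightarrow> zdg_adj n k u v" for u v
  proof (cases "u \<in> V \<and> v \<in> V")
    case True
    then obtain x y where u: "u = Mid x 0" "propr n x" and v: "v = Mid y 0" "propr n y"
      using Vc by auto
    show ?thesis unfolding SR_adj_def zdg_adj_def SRV
      using True mmd[OF u(2) v(2)] mz[OF K u(2) v(2)] u v V_def by auto
  next
    case False
    thus ?thesis using SRV unfolding SR_adj_def zdg_adj_def V_def[symmetric] by auto
  qed
  show ?thesis using SRV adj unfolding V_def E_def by auto
qed

end
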